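(* Let $K$ be a field, $X$ a finite connected poset, $\varphi$ an elementary Lie automorphism of $I(X,K)$ and $\theta=\theta_\varphi$. For any maximal chain $u_1<u_2<\dots<u_m$ in $X$ there exists a maximal chain $v_1<v_2<\dots<v_m$ in $X$ such that either (1) $\theta(e_{u_iu_j})=e_{v_iv_j}$ for all $1\le i<j\le m$, or (2) $\theta(e_{u_iu_j})=e_{v_{m-j+1}v_{m-i+1}}$ for all $1\le i<j\le m$.
   Context: $I(X,K)$ is the incidence algebra: functions $f:X\times X\to K$ with $f(x,y)=0$ unless $x\le y$, product $(fg)(x,y)=\sum_{x\le t\le y}f(x,t)g(t,y)$; $e_{xy}$ ($x\le y$) is the basis element equal to $1$ at $(x,y)$ and $0$ elsewhere. $B=\{e_{xy}:x<y\}$. A Lie automorphism is a bijective linear map preserving $[f,g]=fg-gf$. With $l(\lfloor x,y\rfloor)$ the maximal length of a chain in $\{z:x\le z\le y\}$ and $L_i=\mathrm{span}_K\{e_{xy}:l(\lfloor x,y\rfloor)=i\}$, for a Lie automorphism $\psi$ let $\widetilde\psi$ send $e_{xy}\in L_i$ to the $L_i$-component of $\psi(e_{xy})$. A Lie automorphism $\varphi$ is elementary if $\varphi=\widetilde\psi$ for some Lie automorphism $\psi$. For elementary $\varphi$, for each $x<y$ there are a unique $e_{uv}\in B$ and $k\in K^*$ with $\varphi(e_{xy})=k e_{uv}$; set $\theta_\varphi(e_{xy})=e_{uv}$. Connected means any two elements are joined by a sequence in which consecutive elements are in a covering relation. *)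

theory Defs
  imports Main
begin

text \<open>The poset is a finite carrier set X of an ordered type 'a, with the induced order.
Elements of the incidence algebra I(X,K) are represented as functions 'a => 'a => 'k
vanishing outside {(x,y). x \<in> X, y \<in> X, x \<le> y}.\<close>

definition incidence :: "'a::order set \<Rightarrow> ('a \<Rightarrow> 'a \<Rightarrow> 'k::field) set" where
  "incidence X = {f. \<forall>x y. f x y \<noteq> 0 \<longrightarrow> x \<in> X \<and> y \<in> X \<and> x \<le> y}"

definition inc_mult :: "'a::order set \<Rightarrow> ('a \<Rightarrow> 'a \<Rightarrow> 'k::field) \<Rightarrow> ('a \<Rightarrow> 'a \<Rightarrow> 'k) \<Rightarrow> ('a \<Rightarrow> 'a \<Rightarrow> 'k)" where
  "inc_mult X f g = (\<lambda>x y. \<Sum>t\<in>{t\<in>X. x \<le> t \<and> t \<le> y}. f x t * g t y)"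

definition lie_bracket :: "'a::order set \<Rightarrow> ('a \<Rightarrow> 'a \<Rightarrow> 'k::field) \<Rightarrow> ('a \<Rightarrow> 'a \<Rightarrow> 'k) \<Rightarrow> ('a \<Rightarrow> 'a \<Rightarrow> 'k)" where
  "lie_bracket X f g = (\<lambda>x y. inc_mult X f g x y - inc_mult X g f x y)"

definition inc_e :: "'a \<Rightarrow> 'a \<Rightarrow> ('a \<Rightarrow> 'a \<Rightarrow> 'k::field)" where
  "inc_e x y = (\<lambda>a b. if a = x \<and> b = y then 1 else 0)"

definition is_lie_aut :: "'a::order set \<Rightarrow> (('a \<Rightarrow> 'a \<Rightarrow> 'k::field) \<Rightarrow> ('a \<Rightarrow> 'a \<Rightarrow> 'k)) \<Rightarrow> bool" where
  "is_lie_aut X \<psi> \<longleftrightarrow>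
     bij_betw \<psi> (incidence X) (incidence X) \<and>
     (\<forall>f\<in>incidence X. \<forall>g\<in>incidence X. \<psi> (\<lambda>x y. f x y + g x y) = (\<lambda>x y. \<psi> f x y + \<psi> g x y)) \<and>
     (\<forall>f\<in>incidence X. \<forall>c. \<psi> (\<lambda>x y. c * f x y) = (\<lambda>x y. c * \<psi> f x y)) \<and>
     (\<forall>f\<in>incidence X. \<forall>g\<in>incidence X. \<psi> (lie_bracket X f g) = lie_bracket X (\<psi> f) (\<psi> g))"

definition is_chain :: "'a::order set \<Rightarrow> bool" where
  "is_chain C \<longleftrightarrow> (\<forall>a\<in>C. \<forall>b\<in>C. a \<le> b \<or> b \<le> a)"

definition int_length :: "'a::order set \<Rightarrow> 'a \<Rightarrow> 'a \<Rightarrow> nat" where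
  "int_length X x y = Max {card C - 1 | C. C \<subseteq> {z\<in>X. x \<le> z \<and> z \<le> y} \<and> is_chain C}"

text \<open>\<open>\<psi>~\<close>: sends e_xy to the L_{l(x,y)}-component of \<open>\<psi>(e_xy)\<close>, extended linearly.\<close>
definition tilde :: "'a::order set \<Rightarrow> (('a \<Rightarrow> 'a \<Rightarrow> 'k::field) \<Rightarrow> ('a \<Rightarrow> 'a \<Rightarrow> 'k)) \<Rightarrow> ('a \<Rightarrow> 'a \<Rightarrow> 'k) \<Rightarrow> ('a \<Rightarrow> 'a \<Rightarrow> 'k)" where
  "tilde X \<psi> f = (\<lambda>u v. \<Sum>p\<in>{(x,y). x \<in> X \<and> y \<in> X \<and> x \<le> y}.
      f (fst p) (snd p) *
      (if int_length X u v = int_length X (fst p) (snd p) then \<psi> (inc_e (fst p) (snd p)) u v else 0))"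

definition elementary :: "'a::order set \<Rightarrow> (('a \<Rightarrow> 'a \<Rightarrow> 'k::field) \<Rightarrow> ('a \<Rightarrow> 'a \<Rightarrow> 'k)) \<Rightarrow> bool" where
  "elementary X \<phi> \<longleftrightarrow> is_lie_aut X \<phi> \<and>
     (\<exists>\<psi>. is_lie_aut X \<psi> \<and> (\<forall>f\<in>incidence X. \<phi> f = tilde X \<psi> f))"

text \<open>\<open>\<theta>_\<phi>(e_xy) = e_uv\<close>, represented by the pair (u,v).\<close>
definition theta :: "'a::order set \<Rightarrow> (('a \<Rightarrow> 'a \<Rightarrow> 'k::field) \<Rightarrow> ('a \<Rightarrow> 'a \<Rightarrow> 'k)) \<Rightarrow> 'a \<Rightarrow> 'a \<Rightarrow> 'a \<times> 'a" where
  "theta X \<phi> x y = (THE p. fst p \<in> X \<and> snd p \<in> X \<and> fst p < snd p \<and>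
      (\<exists>k::'k. k \<noteq> 0 \<and> \<phi> (inc_e x y) = (\<lambda>a b. k * inc_e (fst p) (snd p) a b)))"

definition covers :: "'a::order set \<Rightarrow> 'a \<Rightarrow> 'a \<Rightarrow> bool" where
  "covers X x y \<longleftrightarrow> x \<in> X \<and> y \<in> X \<and> x < y \<and> \<not> (\<exists>z\<in>X. x < z \<and> z < y)"

definition poset_connected :: "'a::order set \<Rightarrow> bool" where
  "poset_connected X \<longleftrightarrow>
     (\<forall>x\<in>X. \<forall>y\<in>X. (\<lambda>a b. covers X a b \<or> covers X b a)\<^sup>*\<^sup>* x y)"

definition maximal_chain :: "'a::order set \<Rightarrow> 'a list \<Rightarrow> bool" where
  "maximal_chain X us \<longleftrightarrow> sorted_wrt (<) us \<and> set us \<subseteq> X \<and>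
     (\<forall>C. C \<subseteq> X \<and> is_chain C \<and> set us \<subseteq> C \<longrightarrow> C = set us)"

end

theory Submission
  imports Defs
begin


lemma inc_e_in: "x \<in> X \<Longrightarrow> y \<in> X \<Longrightarrow> x \<le> y \<Longrightarrow> inc_e x y \<in> incidence X"
  unfolding incidence_def inc_e_def by auto

lemma zero_in: "(\<lambda>a b. 0) \<in> incidence X"
  unfolding incidence_def by auto

lemma il_set_finite:
  assumes "finite X"
  shows "finite {card C - 1 | C. C \<subseteq> {z\<in>X. x \<le> z \<and> z \<le> y} \<and> is_chain C}"
proof -
  have "{card C - 1 | C. C \<subseteq> {z\<in>X. x \<le> z \<and> z \<le> y} \<and> is_chain C}
      \<subseteq> (\<lambda>C. card C - 1) ` Pow {z\<in>X. x \<le> z \<and> z \<le> y}" by auto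
  moreover have "finite (Pow {z\<in>X. x \<le> z \<and> z \<le> y})" using assms by simp
  ultimately show ?thesis by (meson finite_imageI finite_subset)
qed

lemma il_ge:
  assumes "finite X" "C \<subseteq> {z\<in>X. x \<le> z \<and> z \<le> y}" "is_chain C"
  shows "card C - 1 \<le> int_length X x y"
  unfolding int_length_def
  by (rule Max_ge[OF il_set_finite[OF assms(1)]]) (use assms in auto)

lemma il_le:
  assumes "finite X" "\<And>C. C \<subseteq> {z\<in>X. x \<le> z \<and> z \<le> y} \<Longrightarrow> is_chain C \<Longrightarrow> card C - 1 \<le> n"
  shows "int_length X x y \<le> n"
proof -
  have ne: "{card C - 1 | C. C \<subseteq> {z\<in>X. x \<le> z \<and> z \<le> y} \<and> is_chain C} \<noteq> {}"
  proof -
    have "card {} - 1 \<in> {card C - 1 | C. C \<subseteq> {z\<in>X. x \<le> z \<and> z \<le> y} \<and> is_chain C}"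
      by (auto simp: is_chain_def intro!: exI[of _ "{}"])
    then show ?thesis by blast
  qed
  show ?thesis unfolding int_length_def
    using Max_le_iff[OF il_set_finite[OF assms(1)] ne] assms(2) by auto
qed

lemma il_refl:
  assumes "finite X" shows "int_length X a a = 0"
proof -
  have "int_length X a a \<le> 0"
  proof (rule il_le[OF assms])
    fix C assume "C \<subseteq> {z\<in>X. a \<le> z \<and> z \<le> a}"
    then have "C \<subseteq> {a}" by auto
    then have "card C \<le> card {a}" by (rule card_mono[rotated]) simp
    then have "card C \<le> 1" by simp
    then show "card C - 1 \<le> 0" by simp
  qed
  then show ?thesis by simp
qed

lemma il_pos:
  assumes "finite X" "a \<in> X" "b \<in> X" "a < b"
  shows "1 \<le> int_length X a b"
proof -
  have "card {a,b} - 1 \<le> int_length X a b"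
    by (rule il_ge[OF assms(1)]) (use assms in \<open>auto simp: is_chain_def\<close>)
  then show ?thesis using assms(4) by simp
qed

lemma il_one_cover:
  assumes "finite X" "int_length X a b = 1" "z \<in> X" "a < z" "z < b" "a \<in> X" "b \<in> X"
  shows False
proof -
  have "card {a,z,b} - 1 \<le> int_length X a b"
    by (rule il_ge[OF assms(1)]) (use assms in \<open>auto simp: is_chain_def\<close>)
  moreover have "a \<noteq> z" "z \<noteq> b" "a \<noteq> b" using assms by auto
  ultimately show ?thesis using assms by simp
qed

lemma il_cover_one:
  assumes "finite X" "a \<in> X" "b \<in> X" "a < b" "\<not> (\<exists>z\<in>X. a < z \<and> z < b)"
  shows "int_length X a b = 1"
proof -
  have "int_length X a b \<le> 1"
  proof (rule il_le[OF assms(1)])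
    fix C assume "C \<subseteq> {z\<in>X. a \<le> z \<and> z \<le> b}"
    then have "C \<subseteq> {a,b}" using assms(5) by fastforce
    then have "card C \<le> card {a,b}" by (rule card_mono[rotated]) simp
    also have "\<dots> \<le> 2" by (simp add: card_insert_le_m1)
    finally have "card C \<le> 2" .
    then show "card C - 1 \<le> 1" by simp
  qed
  then show ?thesis using il_pos[OF assms(1-4)] by simp
qed



lemma mult_mono_e:
  assumes "finite X"
  shows "inc_mult X (\<lambda>s t. k * inc_e a b s t) (\<lambda>s t. k' * inc_e c d s t) s t =
    (if s = a \<and> t = d \<and> b = c \<and> b \<in> X \<and> a \<le> b \<and> b \<le> d then k * k' else 0)"
proof -
  have "inc_mult X (\<lambda>s t. k * inc_e a b s t) (\<lambda>s t. k' * inc_e c d s t) s t =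
     (\<Sum>r\<in>{r\<in>X. s \<le> r \<and> r \<le> t}. if b = r then (if s = a \<and> b = c \<and> t = d then k * k' else 0) else 0)"
    unfolding inc_mult_def inc_e_def by (rule sum.cong) auto
  also have "\<dots> = (if s = a \<and> t = d \<and> b = c \<and> b \<in> X \<and> a \<le> b \<and> b \<le> d then k * k' else 0)"
    using assms by (subst sum.delta') auto
  finally show ?thesis .
qed

lemma mult_e_e:
  assumes "finite X"
  shows "inc_mult X (inc_e a b) (inc_e c d) s t =
    (if s = a \<and> t = d \<and> b = c \<and> b \<in> X \<and> a \<le> b \<and> b \<le> d then 1 else 0)"
proof -
  have "inc_mult X (inc_e a b) (inc_e c d) s t =
     (\<Sum>r\<in>{r\<in>X. s \<le> r \<and> r \<le> t}. if b = r then (if s = a \<and> b = c \<and> t = d then 1 else 0) else 0)"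
    unfolding inc_mult_def inc_e_def by (rule sum.cong) auto
  also have "\<dots> = (if s = a \<and> t = d \<and> b = c \<and> b \<in> X \<and> a \<le> b \<and> b \<le> d then 1 else 0)"
    using assms by (subst sum.delta') auto
  finally show ?thesis .
qed

lemma bracket_e_e:
  assumes "finite X" "x < y" "y < z" "y \<in> X"
  shows "lie_bracket X (inc_e x y) (inc_e y z) = inc_e x z"
  unfolding lie_bracket_def fun_eq_iff mult_e_e[OF assms(1)]
  using assms by (auto simp: inc_e_def)

lemma mult_diag_e:
  assumes "finite X" "\<And>a b. a \<noteq> b \<Longrightarrow> g a b = 0" "x \<in> X" "y \<in> X" "x \<le> y"
  shows "inc_mult X g (inc_e x y) a b = (if a = x \<and> b = y then g x x else 0)"
proof -
  have "inc_mult X g (inc_e x y) a b =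
     (\<Sum>r\<in>{r\<in>X. a \<le> r \<and> r \<le> b}. if x = r then (if a = x \<and> b = y then g x x else 0) else 0)"
    unfolding inc_mult_def inc_e_def using assms(2) by (intro sum.cong) auto
  also have "\<dots> = (if a = x \<and> b = y then g x x else 0)"
    using assms by (subst sum.delta') auto
  finally show ?thesis .
qed

lemma mult_e_diag:
  assumes "finite X" "\<And>a b. a \<noteq> b \<Longrightarrow> g a b = 0" "x \<in> X" "y \<in> X" "x \<le> y"
  shows "inc_mult X (inc_e x y) g a b = (if a = x \<and> b = y then g y y else 0)"
proof -
  have "inc_mult X (inc_e x y) g a b =
     (\<Sum>r\<in>{r\<in>X. a \<le> r \<and> r \<le> b}. if y = r then (if a = x \<and> b = y then g y y else 0) else 0)"
    unfolding inc_mult_def inc_e_def using assms(2) by (intro sum.cong) auto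
  also have "\<dots> = (if a = x \<and> b = y then g y y else 0)"
    using assms by (subst sum.delta') auto
  finally show ?thesis .
qed

lemma bracket_diag_e:
  assumes "finite X" "\<And>a b. a \<noteq> b \<Longrightarrow> g a b = 0" "x \<in> X" "y \<in> X" "x \<le> y"
  shows "lie_bracket X g (inc_e x y) = (\<lambda>a b. (g x x - g y y) * inc_e x y a b)"
proof (rule ext, rule ext)
  fix a b
  show "lie_bracket X g (inc_e x y) a b = (g x x - g y y) * inc_e x y a b"
    unfolding lie_bracket_def using mult_diag_e[OF assms, where a=a and b=b] mult_e_diag[OF assms, where a=a and b=b]
    by (auto simp: inc_e_def)
qed

lemma mult_euu_f:
  assumes "finite X" "f \<in> incidence X" "u \<in> X"
  shows "inc_mult X (inc_e u u) f a b = (if a = u then f a b else 0)"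
proof -
  have "inc_mult X (inc_e u u) f a b =
     (\<Sum>r\<in>{r\<in>X. a \<le> r \<and> r \<le> b}. if u = r then (if a = u then f u b else 0) else 0)"
    unfolding inc_mult_def inc_e_def by (intro sum.cong) auto
  also have "\<dots> = (if a = u then f a b else 0)"
    using assms by (subst sum.delta') (auto simp: incidence_def)
  finally show ?thesis .
qed

lemma mult_f_euu:
  assumes "finite X" "f \<in> incidence X" "u \<in> X"
  shows "inc_mult X f (inc_e u u) a b = (if b = u then f a b else 0)"
proof -
  have "inc_mult X f (inc_e u u) a b =
     (\<Sum>r\<in>{r\<in>X. a \<le> r \<and> r \<le> b}. if u = r then (if b = u then f a u else 0) else 0)"
    unfolding inc_mult_def inc_e_def by (intro sum.cong) auto
  also have "\<dots> = (if b = u then f a b else 0)"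
    using assms by (subst sum.delta') (auto simp: incidence_def)
  finally show ?thesis .
qed

lemma bracket_euu_f:
  assumes "finite X" "f \<in> incidence X" "u \<in> X"
  shows "lie_bracket X (inc_e u u) f = (\<lambda>a b. ((if a = u then 1 else 0) - (if b = u then 1 else 0)) * f a b)"
  unfolding lie_bracket_def fun_eq_iff mult_euu_f[OF assms] mult_f_euu[OF assms]
  by auto



locale elem =
  fixes X :: "'a::order set" and \<phi> :: "('a \<Rightarrow> 'a \<Rightarrow> 'k::field) \<Rightarrow> ('a \<Rightarrow> 'a \<Rightarrow> 'k)"
    and \<psi> :: "('a \<Rightarrow> 'a \<Rightarrow> 'k::field) \<Rightarrow> ('a \<Rightarrow> 'a \<Rightarrow> 'k)"
  assumes fin: "finite X" and laut: "is_lie_aut X \<phi>" and psi: "is_lie_aut X \<psi>"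
    and tl: "\<forall>f\<in>incidence X. \<phi> f = tilde X \<psi> f"
begin

lemma phi_bij: "bij_betw \<phi> (incidence X) (incidence X)"
  using laut unfolding is_lie_aut_def by blast

lemma phi_scal: "f \<in> incidence X \<Longrightarrow> \<phi> (\<lambda>x y. c * f x y) = (\<lambda>x y. c * \<phi> f x y)"
  using laut unfolding is_lie_aut_def by blast

lemma phi_br: "f \<in> incidence X \<Longrightarrow> g \<in> incidence X \<Longrightarrow> \<phi> (lie_bracket X f g) = lie_bracket X (\<phi> f) (\<phi> g)"
  using laut unfolding is_lie_aut_def by blast

lemma phi_in: "f \<in> incidence X \<Longrightarrow> \<phi> f \<in> incidence X"
  using phi_bij by (rule bij_betw_apply)

lemma phi_inj: "f \<in> incidence X \<Longrightarrow> g \<in> incidence X \<Longrightarrow> \<phi> f = \<phi> g \<Longrightarrow> f = g"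
  using phi_bij by (meson bij_betw_def inj_onD)

lemma phi_surj: "g \<in> incidence X \<Longrightarrow> \<exists>f\<in>incidence X. \<phi> f = g"
  using phi_bij by (metis bij_betw_def imageE)

lemma psi_in: "f \<in> incidence X \<Longrightarrow> \<psi> f \<in> incidence X"
proof -
  have "bij_betw \<psi> (incidence X) (incidence X)" using psi unfolding is_lie_aut_def by blast
  then show "f \<in> incidence X \<Longrightarrow> \<psi> f \<in> incidence X" by (rule bij_betw_apply)
qed

lemma finP: "finite {(x,y). x \<in> X \<and> y \<in> X \<and> x \<le> y}"
  by (rule finite_subset[of _ "X \<times> X"]) (use fin in auto)

lemma E1:
  assumes "x \<in> X" "y \<in> X" "x \<le> y"
  shows "\<phi> (inc_e x y) u v = (if int_length X u v = int_length X x y then \<psi> (inc_e x y) u v else 0)"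
proof -
  have "\<phi> (inc_e x y) = tilde X \<psi> (inc_e x y)" using tl inc_e_in[OF assms] by blast
  then have "\<phi> (inc_e x y) u v = tilde X \<psi> (inc_e x y) u v" by simp
  also have "\<dots> = (\<Sum>p\<in>{(x,y). x \<in> X \<and> y \<in> X \<and> x \<le> y}. if (x,y) = p then
     (if int_length X u v = int_length X (fst p) (snd p) then \<psi> (inc_e (fst p) (snd p)) u v else 0) else 0)"
    unfolding tilde_def by (rule sum.cong) (auto simp: inc_e_def)
  also have "\<dots> = (if int_length X u v = int_length X x y then \<psi> (inc_e x y) u v else 0)"
    using assms by (subst sum.delta'[OF finP]) auto
  finally show ?thesis .
qed

lemma E2:
  assumes "g \<in> incidence X"
  shows "\<phi> g u v = (\<Sum>p\<in>{(x,y). x \<in> X \<and> y \<in> X \<and> x \<le> y}. g (fst p) (snd p) * \<phi> (inc_e (fst p) (snd p)) u v)"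
  using tl assms unfolding tilde_def by (auto intro!: sum.cong simp: E1)

lemma phi0: "\<phi> (\<lambda>a b. 0) = (\<lambda>a b. 0)"
  by (rule ext, rule ext, subst E2[OF zero_in]) simp

lemma phi_diag_off:
  assumes "p \<in> X" "s \<noteq> t"
  shows "\<phi> (inc_e p p) s t = 0"
proof -
  have "\<psi> (inc_e p p) s t \<noteq> 0 \<Longrightarrow> int_length X s t \<noteq> int_length X p p"
  proof -
    assume "\<psi> (inc_e p p) s t \<noteq> 0"
    then have "s \<in> X" "t \<in> X" "s \<le> t" using psi_in[OF inc_e_in[OF assms(1) assms(1)]]
      unfolding incidence_def by auto
    then show ?thesis using il_pos[OF fin, of s t] il_refl[OF fin] assms(2) by (auto simp: less_le)
  qed
  then show ?thesis using E1[OF assms(1) assms(1)] by auto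
qed

lemma phi_off_diag:
  assumes "x \<in> X" "y \<in> X" "x < y"
  shows "\<phi> (inc_e x y) s s = 0"
  using E1[of x y s s] assms il_pos[OF fin, of x y] il_refl[OF fin, of s] by auto

lemma diag_preimage:
  assumes "u \<in> X"
  shows "\<exists>g\<in>incidence X. (\<forall>a b. a \<noteq> b \<longrightarrow> g a b = 0) \<and> \<phi> g = inc_e u u"
proof -
  obtain g where g: "g \<in> incidence X" "\<phi> g = inc_e u u"
    using phi_surj[OF inc_e_in[OF assms assms order_refl]] by blast
  define gN where "gN = (\<lambda>a b. if a = b then 0 else g a b)"
  have gN: "gN \<in> incidence X" using g(1) unfolding gN_def incidence_def by auto
  have "\<phi> gN = (\<lambda>a b. 0)"
  proof (rule ext, rule ext)
    fix s t
    show "\<phi> gN s t = 0"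
    proof (cases "s = t")
      case True
      show ?thesis unfolding E2[OF gN]
        by (rule sum.neutral) (auto simp: gN_def True phi_off_diag)
    next
      case False
      have "\<phi> gN s t = \<phi> g s t" unfolding E2[OF gN] E2[OF g(1)]
        by (rule sum.cong) (auto simp: gN_def phi_diag_off False)
      also have "\<dots> = 0" using g(2) False by (auto simp: inc_e_def)
      finally show ?thesis .
    qed
  qed
  then have "gN = (\<lambda>a b. 0)" using phi_inj[OF gN zero_in] phi0 by simp
  then have "\<forall>a b. a \<noteq> b \<longrightarrow> g a b = 0" unfolding gN_def by (metis)
  then show ?thesis using g by blast
qed

end


context elem
begin

lemma eig:
  assumes "x \<in> X" "y \<in> X" "x < y" "u \<in> X"
  shows "\<exists>c. \<forall>s t. ((if s = u then 1 else 0) - (if t = u then 1 else 0)) * \<phi> (inc_e x y) s t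
              = c * \<phi> (inc_e x y) s t"
proof -
  obtain g where g: "g \<in> incidence X" "\<And>a b. a \<noteq> b \<Longrightarrow> g a b = 0" "\<phi> g = inc_e u u"
    using diag_preimage[OF assms(4)] by blast
  have exy: "(inc_e x y :: 'a \<Rightarrow> 'a \<Rightarrow> 'k) \<in> incidence X" by (intro inc_e_in) (use assms in auto)
  have "lie_bracket X (inc_e u u) (\<phi> (inc_e x y)) = \<phi> (lie_bracket X g (inc_e x y))"
    using phi_br[OF g(1) exy] g(3) by simp
  also have "\<dots> = \<phi> (\<lambda>a b. (g x x - g y y) * inc_e x y a b)"
    using bracket_diag_e[OF fin g(2) assms(1,2)] assms(3) by simp
  also have "\<dots> = (\<lambda>a b. (g x x - g y y) * \<phi> (inc_e x y) a b)"
    by (rule phi_scal[OF exy])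
  finally have "\<forall>s t. lie_bracket X (inc_e u u) (\<phi> (inc_e x y)) s t = (g x x - g y y) * \<phi> (inc_e x y) s t"
    by simp
  then show ?thesis unfolding bracket_euu_f[OF fin phi_in[OF exy] assms(4)] by blast
qed

lemma mono:
  assumes "x \<in> X" "y \<in> X" "x < y"
  shows "\<exists>k a b. k \<noteq> 0 \<and> a \<in> X \<and> b \<in> X \<and> a < b \<and> \<phi> (inc_e x y) = (\<lambda>s t. k * inc_e a b s t)
     \<and> int_length X a b = int_length X x y"
proof -
  define f where "f = \<phi> (inc_e x y)"
  have exy: "(inc_e x y :: 'a \<Rightarrow> 'a \<Rightarrow> 'k) \<in> incidence X" by (intro inc_e_in) (use assms in auto)
  have fin_f: "f \<in> incidence X" unfolding f_def by (rule phi_in[OF exy])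
  have "f \<noteq> (\<lambda>a b. 0)"
  proof
    assume "f = (\<lambda>a b. 0)"
    then have "(inc_e x y :: 'a \<Rightarrow> 'a \<Rightarrow> 'k) = (\<lambda>a b. 0)" using phi_inj[OF exy zero_in] phi0 unfolding f_def by simp
    then have "inc_e x y x y = (0::'k)" by simp
    then show False by (simp add: inc_e_def)
  qed
  then obtain a b where ab: "f a b \<noteq> 0" by blast
  then have abX: "a \<in> X" "b \<in> X" "a \<le> b" using fin_f unfolding incidence_def by auto
  have "a \<noteq> b" using ab phi_off_diag[OF assms] unfolding f_def by auto
  then have ablt: "a < b" using abX by simp
  obtain ca where ca: "\<forall>s t. ((if s = a then 1 else 0) - (if t = a then 1 else 0)) * f s t = ca * f s t"
    using eig[OF assms abX(1)] unfolding f_def by blast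
  obtain cb where cb: "\<forall>s t. ((if s = b then 1 else 0) - (if t = b then 1 else 0)) * f s t = cb * f s t"
    using eig[OF assms abX(2)] unfolding f_def by blast
  have ca1: "ca = 1" using ca[rule_format, of a b] ab \<open>a \<noteq> b\<close> by auto
  have "(-1) * f a b = cb * f a b" using cb[rule_format, of a b] ab \<open>a \<noteq> b\<close> by auto
  then have cb1: "cb = -1" using ab by (metis mult_right_cancel)
  have supp: "s = a \<and> t = b" if st: "f s t \<noteq> 0" for s t
  proof -
    have stX: "s \<le> t" using st fin_f unfolding incidence_def by auto
    have "s \<noteq> t" using st phi_off_diag[OF assms] unfolding f_def by auto
    have e1: "(if s = a then 1 else 0) - (if t = a then 1 else 0) = (1::'k)"
      using ca[rule_format, of s t] st ca1 by simp
    have "((if s = b then 1 else 0) - (if t = b then 1 else 0)) * f s t = (-1::'k) * f s t"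
      using cb[rule_format, of s t] cb1 by simp
    then have e2: "(if s = b then 1 else 0) - (if t = b then 1 else 0) = (-1::'k)"
      using st by (metis mult_right_cancel)
    show ?thesis
    proof (cases "s = a")
      case True
      then show ?thesis using e2 \<open>a \<noteq> b\<close> \<open>s \<noteq> t\<close> by (auto split: if_splits)
    next
      case False
      then have "t = a" using e1 by (auto split: if_splits)
      then have "s = b" using e2 \<open>a \<noteq> b\<close> by (auto split: if_splits)
      then show ?thesis using \<open>t = a\<close> stX ablt by auto
    qed
  qed
  have feq: "f = (\<lambda>s t. f a b * inc_e a b s t)"
    using supp by (auto simp: inc_e_def fun_eq_iff)
  have "int_length X a b = int_length X x y"
    using ab E1[OF assms(1,2) less_imp_le[OF assms(3)], of a b] unfolding f_def by (auto split: if_splits)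
  then show ?thesis using feq ab abX ablt unfolding f_def by blast
qed

lemma theta_eq:
  assumes "\<phi> (inc_e x y) = (\<lambda>s t. k * inc_e a b s t)" "k \<noteq> 0" "a \<in> X" "b \<in> X" "a < b"
  shows "theta X \<phi> x y = (a, b)"
  unfolding theta_def
proof (rule the_equality)
  show "fst (a, b) \<in> X \<and> snd (a, b) \<in> X \<and> fst (a, b) < snd (a, b) \<and>
    (\<exists>k. k \<noteq> 0 \<and> \<phi> (inc_e x y) = (\<lambda>s t. k * inc_e (fst (a, b)) (snd (a, b)) s t))"
    using assms by auto
next
  fix p :: "'a \<times> 'a"
  assume "fst p \<in> X \<and> snd p \<in> X \<and> fst p < snd p \<and>
    (\<exists>k. k \<noteq> 0 \<and> \<phi> (inc_e x y) = (\<lambda>s t. k * inc_e (fst p) (snd p) s t))"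
  then obtain k' where k': "k' \<noteq> 0" "(\<lambda>s t. k * inc_e a b s t) = (\<lambda>s t. k' * inc_e (fst p) (snd p) s t)"
    using assms(1) by auto
  then have "k * inc_e a b a b = k' * inc_e (fst p) (snd p) a b" by metis
  then have "a = fst p \<and> b = snd p" using assms(2) by (auto simp: inc_e_def split: if_splits)
  then show "p = (a, b)" by auto
qed

lemma TH:
  assumes "x \<in> X" "y \<in> X" "x < y" "theta X \<phi> x y = (a, b)"
  shows "\<exists>k. k \<noteq> 0 \<and> \<phi> (inc_e x y) = (\<lambda>s t. k * inc_e a b s t) \<and> a \<in> X \<and> b \<in> X \<and> a < b
      \<and> int_length X a b = int_length X x y"
proof -
  obtain k a' b' where m: "k \<noteq> 0" "a' \<in> X" "b' \<in> X" "a' < b'" "\<phi> (inc_e x y) = (\<lambda>s t. k * inc_e a' b' s t)"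
     "int_length X a' b' = int_length X x y"
    using mono[OF assms(1-3)] by blast
  have "theta X \<phi> x y = (a', b')" using theta_eq[OF m(5) m(1-4)] .
  then show ?thesis using assms(4) m by auto
qed

lemma COMP:
  assumes "x \<in> X" "y \<in> X" "z \<in> X" "x < y" "y < z"
    "theta X \<phi> x y = (a, b)" "theta X \<phi> y z = (c, d)"
  shows "(b = c \<and> theta X \<phi> x z = (a, d)) \<or> (d = a \<and> theta X \<phi> x z = (c, b))"
proof -
  obtain k1 where k1: "k1 \<noteq> 0" "\<phi> (inc_e x y) = (\<lambda>s t. k1 * inc_e a b s t)" "a \<in> X" "b \<in> X" "a < b"
    using TH[OF assms(1,2,4,6)] by blast
  obtain k2 where k2: "k2 \<noteq> 0" "\<phi> (inc_e y z) = (\<lambda>s t. k2 * inc_e c d s t)" "c \<in> X" "d \<in> X" "c < d"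
    using TH[OF assms(2,3,5,7)] by blast
  have xz: "x < z" using assms by auto
  obtain p q where pq: "theta X \<phi> x z = (p, q)" by fastforce
  obtain k3 where k3: "k3 \<noteq> 0" "\<phi> (inc_e x z) = (\<lambda>s t. k3 * inc_e p q s t)"
    using TH[OF assms(1,3) xz pq] by blast
  have exy: "(inc_e x y :: 'a \<Rightarrow> 'a \<Rightarrow> 'k) \<in> incidence X" by (intro inc_e_in) (use assms in auto)
  have eyz: "(inc_e y z :: 'a \<Rightarrow> 'a \<Rightarrow> 'k) \<in> incidence X" by (intro inc_e_in) (use assms in auto)
  have br: "lie_bracket X (inc_e x y) (inc_e y z) = (inc_e x z :: 'a \<Rightarrow> 'a \<Rightarrow> 'k)"
    by (rule bracket_e_e[OF fin assms(4,5,2)])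
  have "\<phi> (inc_e x z) = lie_bracket X (\<phi> (inc_e x y)) (\<phi> (inc_e y z))"
    using br phi_br[OF exy eyz] by simp
  then have "k3 * inc_e p q p q = lie_bracket X (\<lambda>s t. k1 * inc_e a b s t) (\<lambda>s t. k2 * inc_e c d s t) p q"
    using k1(2) k2(2) k3(2) by metis
  then have "k3 = (if p = a \<and> q = d \<and> b = c \<and> b \<in> X \<and> a \<le> b \<and> b \<le> d then k1 * k2 else 0)
     - (if p = c \<and> q = b \<and> d = a \<and> d \<in> X \<and> c \<le> d \<and> d \<le> b then k2 * k1 else 0)"
    unfolding lie_bracket_def mult_mono_e[OF fin] by (simp add: inc_e_def)
  then have "(p = a \<and> q = d \<and> b = c) \<or> (p = c \<and> q = b \<and> d = a)" using k3(1) by (auto split: if_splits)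
  then show ?thesis using pq by auto
qed

lemma ZERO:
  assumes "x \<in> X" "y \<in> X" "x < y" "x' \<in> X" "y' \<in> X" "x' < y'"
    "theta X \<phi> x y = (a, b)" "theta X \<phi> x' y' = (b, d)"
  shows "y = x' \<or> y' = x"
proof (rule ccontr)
  assume ne: "\<not> (y = x' \<or> y' = x)"
  obtain k1 where k1: "k1 \<noteq> 0" "\<phi> (inc_e x y) = (\<lambda>s t. k1 * inc_e a b s t)" "a \<in> X" "b \<in> X" "a < b"
    using TH[OF assms(1-3,7)] by blast
  obtain k2 where k2: "k2 \<noteq> 0" "\<phi> (inc_e x' y') = (\<lambda>s t. k2 * inc_e b d s t)" "b \<in> X" "d \<in> X" "b < d"
    using TH[OF assms(4-6,8)] by blast
  have exy: "(inc_e x y :: 'a \<Rightarrow> 'a \<Rightarrow> 'k) \<in> incidence X" by (intro inc_e_in) (use assms in auto)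
  have eyz: "(inc_e x' y' :: 'a \<Rightarrow> 'a \<Rightarrow> 'k) \<in> incidence X" by (intro inc_e_in) (use assms in auto)
  have "lie_bracket X (inc_e x y) (inc_e x' y') = (\<lambda>s t. 0::'k)"
    unfolding lie_bracket_def mult_e_e[OF fin] using ne by auto
  then have "(\<lambda>s t. 0) = lie_bracket X (\<phi> (inc_e x y)) (\<phi> (inc_e x' y'))"
    using phi_br[OF exy eyz] phi0 by simp
  then have "0 = lie_bracket X (\<lambda>s t. k1 * inc_e a b s t) (\<lambda>s t. k2 * inc_e b d s t) a d"
    using k1(2) k2(2) by metis
  then have "0 = (if a = a \<and> d = d \<and> b = b \<and> b \<in> X \<and> a \<le> b \<and> b \<le> d then k1 * k2 else 0)
     - (if a = b \<and> d = b \<and> d = a \<and> d \<in> X \<and> b \<le> d \<and> d \<le> b then k2 * k1 else 0)"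
    unfolding lie_bracket_def mult_mono_e[OF fin] by simp
  then show False using k1 k2 less_imp_le[OF k1(5)] less_imp_le[OF k2(5)] less_imp_neq[OF k1(5)] by auto
qed

lemma SURJ:
  assumes "z \<in> X" "w \<in> X" "z < w"
  shows "\<exists>p q. p \<in> X \<and> q \<in> X \<and> p < q \<and> theta X \<phi> p q = (z, w)"
proof -
  obtain g where g: "g \<in> incidence X" "\<phi> g = inc_e z w"
    using phi_surj[OF inc_e_in[OF assms(1,2) less_imp_le[OF assms(3)]]] by blast
  have "(\<Sum>p\<in>{(x,y). x \<in> X \<and> y \<in> X \<and> x \<le> y}. g (fst p) (snd p) * \<phi> (inc_e (fst p) (snd p)) z w) = 1"
    using E2[OF g(1), of z w] g(2) by (simp add: inc_e_def)
  then obtain p where p: "p \<in> {(x,y). x \<in> X \<and> y \<in> X \<and> x \<le> y}"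
      "g (fst p) (snd p) * \<phi> (inc_e (fst p) (snd p)) z w \<noteq> 0"
    by (metis (no_types, lifting) sum.neutral zero_neq_one)
  obtain p1 p2 where pp: "p = (p1, p2)" by fastforce
  have p12: "p1 \<in> X" "p2 \<in> X" "p1 \<le> p2" using p(1) pp by auto
  have nz: "\<phi> (inc_e p1 p2) z w \<noteq> 0" using p(2) pp by auto
  have "p1 \<noteq> p2" using nz phi_diag_off[of p1 z w] assms(3) p12 by auto
  then have lt: "p1 < p2" using p12 by simp
  obtain a b where ab: "theta X \<phi> p1 p2 = (a, b)" by fastforce
  obtain k where k: "\<phi> (inc_e p1 p2) = (\<lambda>s t. k * inc_e a b s t)"
    using TH[OF p12(1,2) lt ab] by blast
  have "a = z \<and> b = w" using nz unfolding k by (auto simp: inc_e_def split: if_splits)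
  then show ?thesis using ab p12 lt by blast
qed

end


lemma orient:
  fixes t :: "nat \<Rightarrow> nat \<Rightarrow> ('a::order \<times> 'a)"
  assumes lt: "\<And>i j. i < j \<Longrightarrow> j < m \<Longrightarrow> fst (t i j) < snd (t i j)"
    and comp: "\<And>i j k. i < j \<Longrightarrow> j < k \<Longrightarrow> k < m \<Longrightarrow>
      (snd (t i j) = fst (t j k) \<and> t i k = (fst (t i j), snd (t j k))) \<or>
      (snd (t j k) = fst (t i j) \<and> t i k = (fst (t j k), snd (t i j)))"
    and n2: "2 \<le> n"
  shows "n \<le> m \<Longrightarrow> (\<exists>w. \<forall>i j. i < j \<and> j < n \<longrightarrow> t i j = (w i, w j)) \<or>
                    (\<exists>w. \<forall>i j. i < j \<and> j < n \<longrightarrow> t i j = (w j, w i))"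
  using n2
proof (induction n rule: nat_induct_at_least)
  case base
  show ?case
  proof (rule disjI1, rule exI[of _ "\<lambda>i. if i = 0 then fst (t 0 1) else snd (t 0 1)"], intro allI impI)
    fix i j :: nat assume "i < j \<and> j < 2"
    then have "i = 0 \<and> j = 1" by arith
    then show "t i j = ((\<lambda>i. if i = 0 then fst (t 0 1) else snd (t 0 1)) i, (\<lambda>i. if i = 0 then fst (t 0 1) else snd (t 0 1)) j)"
      by simp
  qed
next
  case (Suc n)
  then have nm: "n < m" by simp
  obtain k where n: "n = Suc (Suc k)" using Suc.hyps by (metis add_2_eq_Suc le_Suc_ex)
  obtain a b where ab: "t (Suc k) n = (a, b)" by fastforce
  have ablt: "a < b" using lt[of "Suc k" n] ab nm n by simp
  from Suc.IH nm consider (F) w where "\<forall>i j. i < j \<and> j < n \<longrightarrow> t i j = (w i, w j)"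
    | (B) w where "\<forall>i j. i < j \<and> j < n \<longrightarrow> t i j = (w j, w i)" by auto
  then show ?case
  proof cases
    case F
    have tk: "t k (Suc k) = (w k, w (Suc k))" using F n by auto
    from comp[of k "Suc k" n] nm n tk ab
    have c: "(w (Suc k) = a \<and> t k n = (w k, b)) \<or> (b = w k \<and> t k n = (a, w (Suc k)))" by auto
    then show ?thesis
    proof
      assume A: "w (Suc k) = a \<and> t k n = (w k, b)"
      show ?thesis
      proof (rule disjI1, rule exI[of _ "w(n := b)"], intro allI impI)
        fix i j assume ij: "i < j \<and> j < Suc n"
        show "t i j = ((w(n := b)) i, (w(n := b)) j)"
        proof (cases "j < n")
          case True then show ?thesis using F ij by auto
        next
          case False
          then have j: "j = n" using ij by simp
          show ?thesis
          proof (cases "i = Suc k")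
            case True then show ?thesis using j ab A n by simp
          next
            case False
            then have "i < Suc k" using ij j n by simp
            have ti: "t i (Suc k) = (w i, w (Suc k))" using F n \<open>i < Suc k\<close> by auto
            from comp[of i "Suc k" n] nm n ti ab \<open>i < Suc k\<close> A
            have "t i n = (w i, b) \<or> t i n = (a, a)" by auto
            moreover have "fst (t i n) < snd (t i n)" using lt[of i n] ij j nm by simp
            ultimately have "t i n = (w i, b)" by auto
            then show ?thesis using j ij by simp
          qed
        qed
      qed
    next
      assume Bc: "b = w k \<and> t k n = (a, w (Suc k))"
      show ?thesis
      proof (cases k)
        case 0
        show ?thesis
        proof (rule disjI2, rule exI[of _ "\<lambda>i. if i = 0 then w 1 else if i = 1 then w 0 else a"], intro allI impI)
          fix i j assume ij: "i < j \<and> j < Suc n"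
          then have "(i = 0 \<and> j = 1) \<or> (i = 1 \<and> j = 2) \<or> (i = 0 \<and> j = 2)" using n 0 by auto
          then show "t i j = ((\<lambda>i. if i = 0 then w 1 else if i = 1 then w 0 else a) j,
                              (\<lambda>i. if i = 0 then w 1 else if i = 1 then w 0 else a) i)"
            using tk ab Bc n 0 by (auto simp: numeral_2_eq_2)
        qed
      next
        case (Suc k')
        have t1: "t k' k = (w k', w k)" using F n Suc by auto
        from comp[of k' k n] nm n t1 Bc Suc
        have "(w k = a \<and> t k' n = (w k', w (Suc k))) \<or> (w (Suc k) = w k' \<and> t k' n = (a, w k))" by auto
        moreover have "w k' < w (Suc k)" using lt[of k' "Suc k"] F n Suc nm by auto
        ultimately show ?thesis using Bc ablt by auto
      qed
    qed
  next
    case B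
    have tk: "t k (Suc k) = (w (Suc k), w k)" using B n by auto
    from comp[of k "Suc k" n] nm n tk ab
    have c: "(w k = a \<and> t k n = (w (Suc k), b)) \<or> (b = w (Suc k) \<and> t k n = (a, w k))" by auto
    then show ?thesis
    proof
      assume A: "b = w (Suc k) \<and> t k n = (a, w k)"
      show ?thesis
      proof (rule disjI2, rule exI[of _ "w(n := a)"], intro allI impI)
        fix i j assume ij: "i < j \<and> j < Suc n"
        show "t i j = ((w(n := a)) j, (w(n := a)) i)"
        proof (cases "j < n")
          case True then show ?thesis using B ij by auto
        next
          case False
          then have j: "j = n" using ij by simp
          show ?thesis
          proof (cases "i = Suc k")
            case True then show ?thesis using j ab A n by simp
          next
            case False
            then have "i < Suc k" using ij j n by simp
            have ti: "t i (Suc k) = (w (Suc k), w i)" using B n \<open>i < Suc k\<close> by auto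
            from comp[of i "Suc k" n] nm n ti ab \<open>i < Suc k\<close> A
            have "t i n = (b, b) \<or> t i n = (a, w i)" by auto
            moreover have "fst (t i n) < snd (t i n)" using lt[of i n] ij j nm by simp
            ultimately have "t i n = (a, w i)" by auto
            then show ?thesis using j ij by simp
          qed
        qed
      qed
    next
      assume Bc: "w k = a \<and> t k n = (w (Suc k), b)"
      show ?thesis
      proof (cases k)
        case 0
        show ?thesis
        proof (rule disjI1, rule exI[of _ "\<lambda>i. if i = 0 then w 1 else if i = 1 then w 0 else b"], intro allI impI)
          fix i j assume ij: "i < j \<and> j < Suc n"
          then have "(i = 0 \<and> j = 1) \<or> (i = 1 \<and> j = 2) \<or> (i = 0 \<and> j = 2)" using n 0 by auto
          then show "t i j = ((\<lambda>i. if i = 0 then w 1 else if i = 1 then w 0 else b) i,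
                              (\<lambda>i. if i = 0 then w 1 else if i = 1 then w 0 else b) j)"
            using tk ab Bc n 0 by (auto simp: numeral_2_eq_2)
        qed
      next
        case (Suc k')
        have t1: "t k' k = (w k, w k')" using B n Suc by auto
        from comp[of k' k n] nm n t1 Bc Suc
        have "(w k' = w (Suc k) \<and> t k' n = (w k, b)) \<or> (b = w k \<and> t k' n = (w (Suc k), w k'))" by auto
        moreover have "w (Suc k) < w k'" using lt[of k' "Suc k"] B n Suc nm by auto
        ultimately show ?thesis using Bc ablt by auto
      qed
    qed
  qed
qed



lemma sorted_idx:
  fixes xs :: "'a::order list"
  assumes "sorted_wrt (<) xs" "i < length xs" "j < length xs"
  shows "(xs!i < xs!j) \<longleftrightarrow> i < j"
proof
  assume "xs!i < xs!j"
  show "i < j"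
  proof (rule ccontr)
    assume "\<not> i < j"
    then have "j < i \<or> j = i" by auto
    then show False
      using sorted_wrt_nth_less[OF assms(1), of j i] assms \<open>xs!i < xs!j\<close> by auto
  qed
qed (use sorted_wrt_nth_less[OF assms(1)] assms in auto)

lemma sorted_cmp:
  fixes xs :: "'a::order list"
  assumes "sorted_wrt (<) xs" "x \<in> set xs" "y \<in> set xs"
  shows "x \<le> y \<or> y \<le> x"
proof -
  obtain i j where "i < length xs" "j < length xs" "x = xs!i" "y = xs!j"
    using assms(2,3) by (metis in_set_conv_nth)
  then show ?thesis using sorted_wrt_nth_less[OF assms(1), of i j] sorted_wrt_nth_less[OF assms(1), of j i]
    by (cases "i < j"; cases "j < i") auto
qed

lemma mc_in:
  assumes "maximal_chain X us" "z \<in> X" "\<forall>x\<in>set us. x \<le> z \<or> z \<le> x"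
  shows "z \<in> set us"
proof -
  have "is_chain (insert z (set us))"
    unfolding is_chain_def using assms(3) sorted_cmp[of us] assms(1)
    unfolding maximal_chain_def by blast
  moreover have "insert z (set us) \<subseteq> X" using assms unfolding maximal_chain_def by auto
  ultimately have "insert z (set us) = set us" using assms(1) unfolding maximal_chain_def by blast
  then show ?thesis by auto
qed

lemma mc_bounds:
  assumes "maximal_chain X us" "k < length us"
  shows "us!0 \<le> us!k" "us!k \<le> us!(length us - 1)"
proof -
  have s: "sorted_wrt (<) us" using assms(1) unfolding maximal_chain_def by blast
  show "us!0 \<le> us!k" using sorted_wrt_nth_less[OF s, of 0 k] assms(2) by (cases k) auto
  show "us!k \<le> us!(length us - 1)" using sorted_wrt_nth_less[OF s, of k "length us - 1"] assms(2)
    by (cases "k = length us - 1") (auto intro: less_imp_le)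
qed

lemma mc_min:
  assumes "maximal_chain X us" "us \<noteq> []" "p \<in> X" "p < us!0"
  shows False
proof -
  have "\<forall>x\<in>set us. x \<le> p \<or> p \<le> x"
    using mc_bounds(1)[OF assms(1)] assms(4) by (metis in_set_conv_nth less_imp_le order_trans)
  then have "p \<in> set us" using mc_in assms by blast
  then show False using mc_bounds(1)[OF assms(1)] assms(4) by (metis in_set_conv_nth leD)
qed

lemma mc_max:
  assumes "maximal_chain X us" "us \<noteq> []" "p \<in> X" "us!(length us - 1) < p"
  shows False
proof -
  have "\<forall>x\<in>set us. x \<le> p \<or> p \<le> x"
    using mc_bounds(2)[OF assms(1)] assms(4) by (metis in_set_conv_nth less_imp_le order_trans)
  then have "p \<in> set us" using mc_in assms by blast
  then show False using mc_bounds(2)[OF assms(1)] assms(4) by (metis in_set_conv_nth leD)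
qed

lemma mc_cover:
  assumes "maximal_chain X us" "Suc i < length us" "z \<in> X" "us!i < z" "z < us!(Suc i)"
  shows False
proof -
  have s: "sorted_wrt (<) us" using assms(1) unfolding maximal_chain_def by blast
  have "\<forall>x\<in>set us. x \<le> z \<or> z \<le> x"
  proof
    fix x assume "x \<in> set us"
    then obtain k where k: "k < length us" "x = us!k" by (metis in_set_conv_nth)
    show "x \<le> z \<or> z \<le> x"
    proof (cases "k \<le> i")
      case True
      then have "us!k \<le> us!i" using sorted_wrt_nth_less[OF s, of k i] assms(2) by (cases "k = i") auto
      then show ?thesis using k assms(4) by auto
    next
      case False
      then have "us!(Suc i) \<le> us!k" using sorted_wrt_nth_less[OF s, of "Suc i" k] k by (cases "k = Suc i") auto
      then show ?thesis using k assms(5) by auto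
    qed
  qed
  then have "z \<in> set us" using mc_in assms by blast
  then obtain k where k: "k < length us" "z = us!k" by (metis in_set_conv_nth)
  have "i < k" using sorted_idx[OF s, of i k] k assms by auto
  moreover have "k < Suc i" using sorted_idx[OF s, of k "Suc i"] k assms by auto
  ultimately show False by simp
qed

lemma maxv:
  assumes s: "sorted_wrt (<) vs" and sX: "set vs \<subseteq> X" and ne: "vs \<noteq> []"
    and mn: "\<And>z. z \<in> X \<Longrightarrow> z < vs!0 \<Longrightarrow> False"
    and mx: "\<And>z. z \<in> X \<Longrightarrow> vs!(length vs - 1) < z \<Longrightarrow> False"
    and cv: "\<And>i z. Suc i < length vs \<Longrightarrow> z \<in> X \<Longrightarrow> vs!i < z \<Longrightarrow> z < vs!(Suc i) \<Longrightarrow> False"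
  shows "maximal_chain X vs"
  unfolding maximal_chain_def
proof (intro conjI allI impI s sX)
  fix C assume C: "C \<subseteq> X \<and> is_chain C \<and> set vs \<subseteq> C"
  have "C \<subseteq> set vs"
  proof
    fix z assume zC: "z \<in> C"
    have zX: "z \<in> X" using zC C by auto
    have cmp: "\<And>i. i < length vs \<Longrightarrow> vs!i \<le> z \<or> z \<le> vs!i"
      using C zC unfolding is_chain_def by (meson nth_mem subsetD)
    have P: "vs!i \<le> z \<longrightarrow> z \<in> set vs" if "i \<le> length vs - 1" for i
      using that
    proof (induction i rule: inc_induct)
      case base
      show ?case
      proof
        assume "vs!(length vs - 1) \<le> z"
        then have "z = vs!(length vs - 1)" using mx[OF zX] le_neq_trans by blast
        then show "z \<in> set vs" using ne by auto
      qed
    next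
      case (step n)
      show ?case
      proof
        assume le: "vs!n \<le> z"
        show "z \<in> set vs"
        proof (cases "z = vs!n")
          case True then show ?thesis using step ne by auto
        next
          case False
          then have lt: "vs!n < z" using le by simp
          have sn: "Suc n < length vs" using step ne by (cases vs) auto
          have "vs!(Suc n) \<le> z"
          proof (rule ccontr)
            assume "\<not> vs!(Suc n) \<le> z"
            then have "z < vs!(Suc n)" using cmp[OF sn] by (simp add: order.not_eq_order_implies_strict)
            then show False using cv[OF sn zX lt] by blast
          qed
          then show ?thesis using step.IH by blast
        qed
      qed
    qed
    have "vs!0 \<le> z"
      using cmp[of 0] ne mn[OF zX] by (cases "z = vs!0") (auto simp: order.not_eq_order_implies_strict)
    then show "z \<in> set vs" using P[of 0] by simp
  qed
  then show "C = set vs" using C by auto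
qed



context elem
begin

lemma main:
  assumes mc: "maximal_chain X us"
  shows "\<exists>vs. length vs = length us \<and> maximal_chain X vs \<and>
    ((\<forall>i j. i < j \<and> j < length us \<longrightarrow> theta X \<phi> (us ! i) (us ! j) = (vs ! i, vs ! j)) \<or>
     (\<forall>i j. i < j \<and> j < length us \<longrightarrow>
        theta X \<phi> (us ! i) (us ! j) = (vs ! (length us - 1 - j), vs ! (length us - 1 - i))))"
proof (cases "length us < 2")
  case True
  show ?thesis
  proof (intro exI[of _ us] conjI disjI1 allI impI)
    fix i j assume "i < j \<and> j < length us"
    then show "theta X \<phi> (us ! i) (us ! j) = (us ! i, us ! j)" using True by arith
  qed (use mc in auto)
next
  case False
  define m where "m = length us"
  have m2: "2 \<le> m" using False m_def by simp
  have s: "sorted_wrt (<) us" and usX: "set us \<subseteq> X" using mc unfolding maximal_chain_def by auto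
  have uX: "us!i \<in> X" if "i < m" for i using usX that m_def by auto
  have ult: "us!i < us!j" if "i < j" "j < m" for i j using sorted_wrt_nth_less[OF s that(1)] that m_def by simp
  define t where "t = (\<lambda>i j. theta X \<phi> (us!i) (us!j))"
  have TT: "\<exists>k. k \<noteq> 0 \<and> \<phi> (inc_e (us!i) (us!j)) = (\<lambda>a b. k * inc_e (fst (t i j)) (snd (t i j)) a b)
      \<and> fst (t i j) \<in> X \<and> snd (t i j) \<in> X \<and> fst (t i j) < snd (t i j)
      \<and> int_length X (fst (t i j)) (snd (t i j)) = int_length X (us!i) (us!j)" if "i < j" "j < m" for i j
    using TH[OF uX[of i] uX[of j] ult[OF that], of "fst (t i j)" "snd (t i j)"] that unfolding t_def by simp
  have lt: "fst (t i j) < snd (t i j)" if "i < j" "j < m" for i j using TT[OF that] by blast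
  have tX: "fst (t i j) \<in> X" "snd (t i j) \<in> X" if "i < j" "j < m" for i j using TT[OF that] by blast+
  have tl1: "int_length X (fst (t i j)) (snd (t i j)) = int_length X (us!i) (us!j)" if "i < j" "j < m" for i j
    using TT[OF that] by blast
  have comp: "(snd (t i j) = fst (t j k) \<and> t i k = (fst (t i j), snd (t j k))) \<or>
      (snd (t j k) = fst (t i j) \<and> t i k = (fst (t j k), snd (t i j)))" if "i < j" "j < k" "k < m" for i j k
  proof -
    obtain a b where ab: "t i j = (a, b)" by fastforce
    obtain c d where cd: "t j k = (c, d)" by fastforce
    have "(b = c \<and> theta X \<phi> (us!i) (us!k) = (a, d)) \<or> (d = a \<and> theta X \<phi> (us!i) (us!k) = (c, b))"
      by (rule COMP[OF uX uX uX ult ult]) (use that ab cd t_def in auto)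
    then show ?thesis using ab cd unfolding t_def by auto
  qed
  have cover_us: "int_length X (us!i) (us!(Suc i)) = 1" if "Suc i < m" for i
    by (rule il_cover_one[OF fin uX uX ult]) (use that mc_cover[OF mc, of i] m_def in auto)
  have t0: "theta X \<phi> (us!0) (us!(m-1)) = t 0 (m-1)" unfolding t_def by simp
  have finish: "maximal_chain X vs" if len: "length vs = m"
    and PA: "\<And>i j. i < j \<Longrightarrow> j < m \<Longrightarrow> \<exists>i' j'. i' < j' \<and> j' < m \<and> t i' j' = (vs!i, vs!j) \<and> (j = Suc i \<longrightarrow> j' = Suc i')"
    and PB: "t 0 (m-1) = (vs!0, vs!(m-1))" for vs
  proof (rule maxv)
    have vlt: "vs!i < vs!j \<and> vs!i \<in> X \<and> vs!j \<in> X" if ij: "i < j" "j < m" for i j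
    proof -
      obtain i' j' where "i' < j'" "j' < m" "t i' j' = (vs!i, vs!j)" using PA[OF ij] by blast
      then show ?thesis using lt[of i' j'] tX[of i' j'] by auto
    qed
    show "sorted_wrt (<) vs" unfolding sorted_wrt_iff_nth_less using vlt len by auto
    show "set vs \<subseteq> X"
    proof
      fix x assume "x \<in> set vs"
      then obtain i where i: "i < m" "x = vs!i" using len by (metis in_set_conv_nth)
      show "x \<in> X"
      proof (cases i)
        case 0 then show ?thesis using vlt[of 0 1] m2 i by auto
      next
        case (Suc i') then show ?thesis using vlt[of 0 i] i by auto
      qed
    qed
    show "vs \<noteq> []" using len m2 by auto
    have v0X: "vs!0 \<in> X" and vlX: "vs!(length vs - 1) \<in> X" using vlt[of 0 "m-1"] m2 len by auto
    have us_ne: "us \<noteq> []" using m2 m_def by auto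
    have th0: "theta X \<phi> (us!0) (us!(m-1)) = (vs!0, vs!(m-1))" using t0 PB by simp
    show False if zz: "z \<in> X" "z < vs!0" for z
    proof -
      obtain p q where pq: "p \<in> X" "q \<in> X" "p < q" "theta X \<phi> p q = (z, vs!0)"
        using SURJ[OF zz(1) v0X zz(2)] by blast
      have "q = us!0 \<or> us!(m-1) = p"
        by (rule ZERO[OF pq(1-3) uX uX ult pq(4) th0]) (use m2 in auto)
      then show False
      proof
        assume "q = us!0" then show False using mc_min[OF mc us_ne pq(1)] pq(3) by simp
      next
        assume "us!(m-1) = p" then show False using mc_max[OF mc us_ne pq(2)] pq(3) m_def by simp
      qed
    qed
    show False if zz: "z \<in> X" "vs!(length vs - 1) < z" for z
    proof -
      obtain p q where pq: "p \<in> X" "q \<in> X" "p < q" "theta X \<phi> p q = (vs!(m-1), z)"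
        using SURJ[OF vlX zz(1) zz(2)] len by auto
      have "us!(m-1) = p \<or> q = us!0"
        by (rule ZERO[OF uX uX ult pq(1-3) th0 pq(4)]) (use m2 in auto)
      then show False
      proof
        assume "q = us!0" then show False using mc_min[OF mc us_ne pq(1)] pq(3) by simp
      next
        assume "us!(m-1) = p" then show False using mc_max[OF mc us_ne pq(2)] pq(3) m_def by simp
      qed
    qed
    show False if zz: "Suc i < length vs" "z \<in> X" "vs!i < z" "z < vs!(Suc i)" for i z
    proof -
      obtain i' j' where ij: "i' < j'" "j' < m" "t i' j' = (vs!i, vs!(Suc i))" "j' = Suc i'"
        using PA[of i "Suc i"] zz(1) len by auto
      have "int_length X (vs!i) (vs!(Suc i)) = 1"
        using tl1[OF ij(1,2)] ij(3,4) cover_us[of i'] ij(2) by simp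
      then show False
        using il_one_cover[OF fin _ zz(2-4)] vlt[of i "Suc i"] zz(1) len by auto
    qed
  qed
  have "(\<exists>w. \<forall>i j. i < j \<and> j < m \<longrightarrow> t i j = (w i, w j)) \<or> (\<exists>w. \<forall>i j. i < j \<and> j < m \<longrightarrow> t i j = (w j, w i))"
    by (rule orient[of m t m, OF lt comp m2]) auto
  then show ?thesis
  proof
    assume "\<exists>w. \<forall>i j. i < j \<and> j < m \<longrightarrow> t i j = (w i, w j)"
    then obtain w where w: "\<And>i j. i < j \<Longrightarrow> j < m \<Longrightarrow> t i j = (w i, w j)" by blast
    define vs where "vs = map w [0..<m]"
    have len: "length vs = m" unfolding vs_def by simp
    have vi: "vs!i = w i" if "i < m" for i unfolding vs_def using that by simp
    have "maximal_chain X vs"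
    proof (rule finish[OF len])
      show "\<exists>i' j'. i' < j' \<and> j' < m \<and> t i' j' = (vs!i, vs!j) \<and> (j = Suc i \<longrightarrow> j' = Suc i')"
        if "i < j" "j < m" for i j
        using that w[OF that] vi[of i] vi[of j] by (intro exI[of _ i] exI[of _ j]) auto
      show "t 0 (m-1) = (vs!0, vs!(m-1))" using w[of 0 "m-1"] vi[of 0] vi[of "m-1"] m2 by simp
    qed
    moreover have "\<forall>i j. i < j \<and> j < length us \<longrightarrow> theta X \<phi> (us ! i) (us ! j) = (vs ! i, vs ! j)"
      using w vi unfolding t_def m_def by auto
    ultimately show ?thesis using len m_def by blast
  next
    assume "\<exists>w. \<forall>i j. i < j \<and> j < m \<longrightarrow> t i j = (w j, w i)"
    then obtain w where w: "\<And>i j. i < j \<Longrightarrow> j < m \<Longrightarrow> t i j = (w j, w i)" by blast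
    define vs where "vs = map (\<lambda>i. w (m - 1 - i)) [0..<m]"
    have len: "length vs = m" unfolding vs_def by simp
    have vi: "vs!i = w (m - 1 - i)" if "i < m" for i unfolding vs_def using that by simp
    have "maximal_chain X vs"
    proof (rule finish[OF len])
      show "\<exists>i' j'. i' < j' \<and> j' < m \<and> t i' j' = (vs!i, vs!j) \<and> (j = Suc i \<longrightarrow> j' = Suc i')"
        if "i < j" "j < m" for i j
      proof -
        have 1: "m - 1 - j < m - 1 - i" "m - 1 - i < m" using that by auto
        have 2: "t (m - 1 - j) (m - 1 - i) = (vs!i, vs!j)"
          using w[of "m - 1 - j" "m - 1 - i"] vi[of i] vi[of j] that by auto
        have 3: "j = Suc i \<longrightarrow> m - 1 - i = Suc (m - 1 - j)" using that by auto
        show ?thesis using 1 2 3 by blast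
      qed
      show "t 0 (m-1) = (vs!0, vs!(m-1))" using w[of 0 "m-1"] vi[of 0] vi[of "m-1"] m2 by simp
    qed
    moreover have "\<forall>i j. i < j \<and> j < length us \<longrightarrow>
        theta X \<phi> (us ! i) (us ! j) = (vs ! (length us - 1 - j), vs ! (length us - 1 - i))"
    proof (intro allI impI)
      fix i j assume ij: "i < j \<and> j < length us"
      have "vs ! (m - 1 - j) = w j" "vs ! (m - 1 - i) = w i" using vi ij m_def by auto
      then show "theta X \<phi> (us ! i) (us ! j) = (vs ! (length us - 1 - j), vs ! (length us - 1 - i))"
        using w[of i j] ij unfolding t_def m_def by auto
    qed
    ultimately show ?thesis using len m_def by blast
  qed
qed

end

theorem lemma5p4:
  fixes X :: "'a::order set" and \<phi> :: "('a \<Rightarrow> 'a \<Rightarrow> 'k::field) \<Rightarrow> ('a \<Rightarrow> 'a \<Rightarrow> 'k)"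
    and us :: "'a list"
  assumes "finite X" and "poset_connected X" and "elementary X \<phi>"
    and "maximal_chain X us"
  shows "\<exists>vs. length vs = length us \<and> maximal_chain X vs \<and>
    ((\<forall>i j. i < j \<and> j < length us \<longrightarrow> theta X \<phi> (us ! i) (us ! j) = (vs ! i, vs ! j)) \<or>
     (\<forall>i j. i < j \<and> j < length us \<longrightarrow>
        theta X \<phi> (us ! i) (us ! j) = (vs ! (length us - 1 - j), vs ! (length us - 1 - i))))"
proof -
  obtain \<psi> where psi: "is_lie_aut X \<psi>" "\<forall>f\<in>incidence X. \<phi> f = tilde X \<psi> f"
    using assms(3) unfolding elementary_def by blast
  have "is_lie_aut X \<phi>" using assms(3) unfolding elementary_def by blast
  then interpret elem X \<phi> \<psi> using assms(1) psi by unfold_locales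
  show ?thesis by (rule main[OF assms(4)])
qed


end
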